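(* Assume $y$ is $q$-full. Let $(m_i)_{i\in\mathbb{Z}/b\mathbb{Z}}$ and $(n_i)_{i\in\mathbb{Z}/b\mathbb{Z}}$ be tuples of positive integers with $m_{i-1}\le p\,m_i$ and $n_{i-1}\le p\,n_i$ for all $i$. If $\sum_{i\in\mathbb{Z}/b\mathbb{Z}}y_i(pm_i-m_{i-1})=\sum_{i\in\mathbb{Z}/b\mathbb{Z}}y_i(pn_i-n_{i-1})$, then $m_i=n_i$ for all $i$.
   Context: Let $q=p^b$, $p$ prime. Write $y\in\mathbb{Z}_p$ as $y=\sum_{i=1}^b p^{i-1}y_i$, $y_i=\sum_{j\ge0}y_{i,j}q^j$, $0\le y_{i,j}<p$; $y$ is $q$-full if no $y_i$ is a non-negative integer. Indices $i$ are in $\mathbb{Z}/b\mathbb{Z}$. For $n\ge1$, $d_i(n)=p^{i-1}q^w$ where $w\ge0$ is the unique integer with $\sum_{j=0}^{w-1}y_{i,j}<n\le\sum_{j=0}^{w}y_{i,j}$; $y_i(m)=\sum_{n=1}^m d_i(n)$ for $m\in\mathbb{Z}$ (zero for $m\le0$). (In the paper's language, the tuples are coordinates of $p$-bounded rotational $b$-cycles of $\mathbb{Z}/b\mathbb{Z}\times\mathbb{Z}_{>0}$ and the sums are their $R$-values.) *)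

theory Defs
  imports "HOL-Computational_Algebra.Primes"
begin

text \<open>A p-adic integer y is represented by its p-adic digit sequence
  y :: nat => nat (y = sum_k y k * p^k, 0 <= y k < p).  With q = p^b and
  y = sum_{i=1..b} p^(i-1) y_i, y_i = sum_j y_{i,j} q^j, the digit y_{i,j}
  is the p-adic digit of y at position (i-1) + b*j.  Indices of Z/bZ are
  represented by 1..b.\<close>

definition ydig :: "nat \<Rightarrow> (nat \<Rightarrow> nat) \<Rightarrow> nat \<Rightarrow> nat \<Rightarrow> nat" where
  "ydig b y i j = y ((i - 1) + b * j)"

definition yi_nonneg_int :: "nat \<Rightarrow> (nat \<Rightarrow> nat) \<Rightarrow> nat \<Rightarrow> bool" where
  "yi_nonneg_int b y i \<longleftrightarrow> (\<exists>N. \<forall>j\<ge>N. ydig b y i j = 0)"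

definition q_full :: "nat \<Rightarrow> (nat \<Rightarrow> nat) \<Rightarrow> bool" where
  "q_full b y \<longleftrightarrow> (\<forall>i\<in>{1..b}. \<not> yi_nonneg_int b y i)"

definition cprev :: "nat \<Rightarrow> nat \<Rightarrow> nat" where
  "cprev b i = (if i = 1 then b else i - 1)"

definition dval :: "nat \<Rightarrow> nat \<Rightarrow> (nat \<Rightarrow> nat) \<Rightarrow> nat \<Rightarrow> nat \<Rightarrow> int" where
  "dval p b y i n =
     (let w = (THE w. (\<Sum>j<w. ydig b y i j) < n \<and> n \<le> (\<Sum>j<Suc w. ydig b y i j))
      in int p ^ (i - 1) * (int p ^ b) ^ w)"

text \<open>y_i(m) = sum_{n=1}^m d_i(n), zero for m <= 0\<close>
definition Rval :: "nat \<Rightarrow> nat \<Rightarrow> (nat \<Rightarrow> nat) \<Rightarrow> nat \<Rightarrow> int \<Rightarrow> int" where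
  "Rval p b y i m = (\<Sum>n\<in>{1..m}. dval p b y i (nat n))"

end

theory Submission
  imports Defs "HOL-Library.Infinite_Set"
begin

definition PP :: "(nat \<Rightarrow> nat) \<Rightarrow> nat \<Rightarrow> nat" where
  "PP a w = (\<Sum>j<w. a j)"

definition cc :: "(nat \<Rightarrow> nat) \<Rightarrow> nat \<Rightarrow> nat \<Rightarrow> nat" where
  "cc a k w = min (a w) (k - PP a w)"

definition wof :: "(nat \<Rightarrow> nat) \<Rightarrow> nat \<Rightarrow> nat" where
  "wof a n = (THE w. PP a w < n \<and> n \<le> PP a (Suc w))"

lemma PP_Suc: "PP a (Suc w) = PP a w + a w"
  by (simp add: PP_def)

lemma PP_0: "PP a 0 = 0"
  by (simp add: PP_def)

lemma PP_mono: "w1 \<le> w2 \<Longrightarrow> PP a w1 \<le> PP a w2"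
  unfolding PP_def by (rule sum_mono2) auto

lemma PP_unbounded:
  assumes nz: "\<forall>N. \<exists>j\<ge>N. a j \<noteq> 0"
  shows "\<exists>w. M \<le> PP a w"
proof (induction M)
  case 0 then show ?case by auto
next
  case (Suc M)
  then obtain w where w: "M \<le> PP a w" by auto
  obtain j where j: "j \<ge> w" "a j \<noteq> 0" using nz by blast
  have "PP a w \<le> PP a j" using PP_mono j(1) by blast
  then have "Suc M \<le> PP a (Suc j)" using w j(2) by (simp add: PP_Suc)
  then show ?case by blast
qed

lemma wof_uniq:
  assumes "PP a w1 < n" "n \<le> PP a (Suc w1)" "PP a w2 < n" "n \<le> PP a (Suc w2)"
  shows "w1 = w2"
proof (rule ccontr)
  assume "w1 \<noteq> w2"
  then have "Suc w1 \<le> w2 \<or> Suc w2 \<le> w1" by auto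
  then show False
    using PP_mono[of "Suc w1" w2 a] PP_mono[of "Suc w2" w1 a] assms by auto
qed

lemma wof_spec:
  assumes nz: "\<forall>N. \<exists>j\<ge>N. a j \<noteq> 0" and n: "n \<ge> 1"
  shows "PP a (wof a n) < n \<and> n \<le> PP a (Suc (wof a n))"
proof -
  obtain w where w: "n \<le> PP a w" using PP_unbounded[OF nz] by blast
  then have ex: "n \<le> PP a (Suc w)" using PP_mono[of w "Suc w" a] by auto
  define w0 where "w0 = (LEAST w. n \<le> PP a (Suc w))"
  have h1: "n \<le> PP a (Suc w0)" unfolding w0_def by (rule LeastI[of _ w], rule ex)
  have h2: "PP a w0 < n"
  proof (cases w0)
    case 0 then show ?thesis using n by (simp add: PP_0)
  next
    case (Suc v)
    then have "v < w0" by auto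
    then have "\<not> n \<le> PP a (Suc v)" unfolding w0_def by (rule not_less_Least)
    then show ?thesis using Suc by auto
  qed
  have "wof a n = w0"
    unfolding wof_def
    apply (rule the_equality)
    using h1 h2 apply blast
    using h1 h2 wof_uniq by blast
  then show ?thesis using h1 h2 by simp
qed

lemma cc_Suc: "cc a (Suc k) w = cc a k w + (if PP a w \<le> k \<and> k < PP a (Suc w) then 1 else 0)"
  unfolding cc_def PP_Suc by auto

lemma cc_sum: "(\<Sum>w<W. cc a k w) = min k (PP a W)"
  by (induction W) (auto simp: PP_Suc PP_0 cc_def)

lemma cc_le: "cc a k w \<le> a w"
  by (simp add: cc_def)

lemma Rval_expand:
  assumes nz: "\<forall>N. \<exists>j\<ge>N. ydig b y i j \<noteq> 0"
  shows "k \<le> PP (ydig b y i) W \<Longrightarrow>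
    Rval p b y i (int k) = int (\<Sum>w<W. cc (ydig b y i) k w * p ^ ((i - 1) + b * w))"
proof (induction k)
  case 0
  then show ?case by (simp add: Rval_def cc_def)
next
  case (Suc k)
  define a where "a = ydig b y i"
  define w0 where "w0 = wof a (Suc k)"
  have sp: "PP a w0 < Suc k \<and> Suc k \<le> PP a (Suc w0)"
    unfolding w0_def a_def using wof_spec[OF nz] by auto
  have w0W: "w0 < W"
  proof (rule ccontr)
    assume "\<not> w0 < W"
    then have "PP a W \<le> PP a w0" using PP_mono by auto
    then show False using sp Suc.prems a_def by auto
  qed
  have cond: "(PP a w \<le> k \<and> k < PP a (Suc w)) \<longleftrightarrow> w = w0" for w
    using wof_uniq[of a w "Suc k" w0] sp by auto
  have d: "dval p b y i (Suc k) = int (p ^ ((i - 1) + b * w0))"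
    unfolding dval_def Let_def w0_def wof_def a_def PP_def
    by (simp add: power_mult power_add)
  have R: "Rval p b y i (int (Suc k)) = Rval p b y i (int k) + dval p b y i (Suc k)"
  proof -
    have "{1..int (Suc k)} = insert (1 + int k) {1..int k}"
      using atLeastAtMostPlus1_int_conv[of 1 "int k"] by simp
    then have "Rval p b y i (int (Suc k)) = (\<Sum>n\<in>insert (1 + int k) {1..int k}. dval p b y i (nat n))"
      unfolding Rval_def by simp
    also have "\<dots> = dval p b y i (nat (1 + int k)) + Rval p b y i (int k)"
      unfolding Rval_def by (subst sum.insert) auto
    also have "nat (1 + int k) = Suc k" by linarith
    finally show ?thesis by simp
  qed
  have "(\<Sum>w<W. cc a (Suc k) w * p ^ ((i - 1) + b * w))
      = (\<Sum>w<W. cc a k w * p ^ ((i - 1) + b * w) + (if w = w0 then p ^ ((i - 1) + b * w) else 0))"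
    by (rule sum.cong) (auto simp: cc_Suc cond algebra_simps)
  also have "\<dots> = (\<Sum>w<W. cc a k w * p ^ ((i - 1) + b * w)) + p ^ ((i - 1) + b * w0)"
    using w0W by (simp add: sum.distrib)
  finally show ?case using R d Suc.IH Suc.prems a_def by simp
qed

lemma geo_bound:
  fixes D :: "nat \<Rightarrow> nat" and p :: nat
  assumes "\<forall>t<N. D t < p"
  shows "(\<Sum>t<N. D t * p ^ t) < p ^ N"
  using assms
proof (induction N)
  case 0 then show ?case by simp
next
  case (Suc N)
  then have a: "(\<Sum>t<N. D t * p ^ t) < p ^ N" and b: "D N + 1 \<le> p" by auto
  have "(\<Sum>t<Suc N. D t * p ^ t) = (\<Sum>t<N. D t * p ^ t) + D N * p ^ N" by simp
  also have "\<dots> < p ^ N + D N * p ^ N" using a by simp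
  also have "\<dots> = (D N + 1) * p ^ N" by simp
  also have "\<dots> \<le> p * p ^ N" using b mult_le_mono1 by blast
  finally show ?case by simp
qed

lemma digits_unique_N:
  fixes D D' :: "nat \<Rightarrow> nat" and p :: nat
  assumes "\<forall>t<N. D t < p \<and> D' t < p"
    and "(\<Sum>t<N. D t * p ^ t) = (\<Sum>t<N. D' t * p ^ t)"
  shows "\<forall>t<N. D t = D' t"
  using assms
proof (induction N)
  case 0 then show ?case by simp
next
  case (Suc N)
  define S where "S = (\<Sum>t<N. D t * p ^ t)"
  define S' where "S' = (\<Sum>t<N. D' t * p ^ t)"
  have bS: "S < p ^ N" unfolding S_def using geo_bound[of N D p] Suc.prems by auto
  have bS': "S' < p ^ N" unfolding S'_def using geo_bound[of N D' p] Suc.prems by auto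
  have eq: "S + D N * p ^ N = S' + D' N * p ^ N" using Suc.prems(2) by (simp add: S_def S'_def)
  have pN: "p ^ N > 0" using bS by linarith
  have "(S + D N * p ^ N) div p ^ N = D N" using bS pN by simp
  moreover have "(S' + D' N * p ^ N) div p ^ N = D' N" using bS' pN by simp
  ultimately have dN: "D N = D' N" using eq by simp
  then have "S = S'" using eq by simp
  moreover have "\<forall>t<N. D t < p \<and> D' t < p" using Suc.prems(1) by auto
  ultimately have "\<forall>t<N. D t = D' t" using Suc.IH unfolding S_def S'_def by blast
  then show ?case using dN less_Suc_eq by auto
qed

lemma digits_unique_set:
  fixes T :: "nat set" and D D' :: "nat \<Rightarrow> nat" and p :: nat
  assumes fin: "finite T" and bd: "\<forall>t\<in>T. D t < p \<and> D' t < p"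
    and eq: "(\<Sum>t\<in>T. D t * p ^ t) = (\<Sum>t\<in>T. D' t * p ^ t)"
  shows "\<forall>t\<in>T. D t = D' t"
proof -
  obtain N where N: "T \<subseteq> {..<N}" using fin finite_nat_bounded by blast
  define E where "E t = (if t \<in> T then D t else 0)" for t
  define E' where "E' t = (if t \<in> T then D' t else 0)" for t
  have pp: "p > 0" if "T \<noteq> {}" using bd that by force
  have 1: "(\<Sum>t<N. E t * p ^ t) = (\<Sum>t\<in>T. E t * p ^ t)"
    by (rule sum.mono_neutral_right) (use N E_def in auto)
  have 2: "(\<Sum>t<N. E' t * p ^ t) = (\<Sum>t\<in>T. E' t * p ^ t)"
    by (rule sum.mono_neutral_right) (use N E'_def in auto)
  have 3: "(\<Sum>t\<in>T. E t * p ^ t) = (\<Sum>t\<in>T. D t * p ^ t)" by (rule sum.cong) (auto simp: E_def)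
  have 4: "(\<Sum>t\<in>T. E' t * p ^ t) = (\<Sum>t\<in>T. D' t * p ^ t)" by (rule sum.cong) (auto simp: E'_def)
  show ?thesis
  proof (cases "T = {}")
    case True then show ?thesis by simp
  next
    case False
    have "\<forall>t<N. E t < p \<and> E' t < p" using bd pp[OF False] by (auto simp: E_def E'_def)
    then have "\<forall>t<N. E t = E' t" using digits_unique_N[of N E p E'] 1 2 3 4 eq by simp
    then show ?thesis using N E_def E'_def by force
  qed
qed

lemma digits_unique_inj:
  fixes D D' :: "'a \<Rightarrow> nat" and p :: nat
  assumes fin: "finite A" and inj: "inj_on e A" and bd: "\<forall>x\<in>A. D x < p \<and> D' x < p"
    and eq: "(\<Sum>x\<in>A. D x * p ^ e x) = (\<Sum>x\<in>A. D' x * p ^ e x)"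
  shows "\<forall>x\<in>A. D x = D' x"
proof -
  define F where "F t = D (the_inv_into A e t)" for t
  define F' where "F' t = D' (the_inv_into A e t)" for t
  have FD: "F (e x) = D x" "F' (e x) = D' x" if "x \<in> A" for x
    using the_inv_into_f_f[OF inj that] by (auto simp: F_def F'_def)
  have a: "(\<Sum>x\<in>A. D x * p ^ e x) = (\<Sum>t\<in>e ` A. F t * p ^ t)"
    by (simp add: sum.reindex[OF inj] FD)
  have b: "(\<Sum>x\<in>A. D' x * p ^ e x) = (\<Sum>t\<in>e ` A. F' t * p ^ t)"
    by (simp add: sum.reindex[OF inj] FD)
  have "\<forall>t\<in>e ` A. F t = F' t"
    by (rule digits_unique_set) (use fin bd FD a b eq in auto)
  then show ?thesis using FD by auto
qed

lemma enc_inj: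
  fixes b i1 i2 w1 w2 :: nat
  assumes "i1 + b * w1 = i2 + b * w2" "0 < b" "i1 < b" "i2 < b"
  shows "i1 = i2 \<and> w1 = w2"
proof -
  have m1: "(i1 + b * w1) mod b = i1" using assms(2,3) by simp
  have m2: "(i2 + b * w2) mod b = i2" using assms(2,4) by simp
  have d1: "(i1 + b * w1) div b = w1" using assms(2,3) by simp
  have d2: "(i2 + b * w2) div b = w2" using assms(2,4) by simp
  show ?thesis using m1 m2 d1 d2 assms(1) by metis
qed

theorem lemma6p22:
  fixes p b :: nat and y :: "nat \<Rightarrow> nat" and m n :: "nat \<Rightarrow> int"
  assumes "prime p" and "b \<ge> 1"
    and "\<forall>k. y k < p"
    and "q_full b y"
    and "\<forall>i\<in>{1..b}. m i > 0 \<and> n i > 0"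
    and "\<forall>i\<in>{1..b}. m (cprev b i) \<le> int p * m i"
    and "\<forall>i\<in>{1..b}. n (cprev b i) \<le> int p * n i"
    and "(\<Sum>i=1..b. Rval p b y i (int p * m i - m (cprev b i)))
       = (\<Sum>i=1..b. Rval p b y i (int p * n i - n (cprev b i)))"
  shows "\<forall>i\<in>{1..b}. m i = n i"
proof -
  have p2: "p \<ge> 2" using assms(1) prime_ge_2_nat by blast
  have nz: "\<forall>N. \<exists>j\<ge>N. ydig b y i j \<noteq> 0" if "i \<in> {1..b}" for i
    using assms(4) that unfolding q_full_def yi_nonneg_int_def by blast
  define k where "k i = nat (int p * m i - m (cprev b i))" for i
  define k' where "k' i = nat (int p * n i - n (cprev b i))" for i
  have kk: "int (k i) = int p * m i - m (cprev b i)" "int (k' i) = int p * n i - n (cprev b i)"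
    if "i \<in> {1..b}" for i using assms(6,7) that by (auto simp: k_def k'_def)
  define Wi where "Wi i = (LEAST W. k i \<le> PP (ydig b y i) W \<and> k' i \<le> PP (ydig b y i) W)" for i
  define W where "W = (\<Sum>i\<in>{1..b}. Wi i)"
  have Wok: "k i \<le> PP (ydig b y i) W \<and> k' i \<le> PP (ydig b y i) W" if i: "i \<in> {1..b}" for i
  proof -
    obtain w1 where w1: "k i + k' i \<le> PP (ydig b y i) w1" using PP_unbounded[OF nz[OF i]] by blast
    have "k i \<le> PP (ydig b y i) (Wi i) \<and> k' i \<le> PP (ydig b y i) (Wi i)"
      unfolding Wi_def by (rule LeastI[of _ w1]) (use w1 in auto)
    moreover have "Wi i \<le> W" unfolding W_def by (rule member_le_sum) (use i in auto)
    ultimately show ?thesis using PP_mono[of "Wi i" W "ydig b y i"] by auto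
  qed
  define e where "e x = (fst x - 1) + b * snd x" for x :: "nat \<times> nat"
  define A where "A = {1..b} \<times> {..<W}"
  define D where "D x = cc (ydig b y (fst x)) (k (fst x)) (snd x)" for x
  define D' where "D' x = cc (ydig b y (fst x)) (k' (fst x)) (snd x)" for x
  have Rm: "Rval p b y i (int p * m i - m (cprev b i)) = int (\<Sum>w<W. D (i, w) * p ^ e (i, w))"
    if i: "i \<in> {1..b}" for i
    using Rval_expand[OF nz[OF i], of "k i" W p] Wok[OF i] kk[OF i] by (simp add: D_def e_def)
  have Rn: "Rval p b y i (int p * n i - n (cprev b i)) = int (\<Sum>w<W. D' (i, w) * p ^ e (i, w))"
    if i: "i \<in> {1..b}" for i
    using Rval_expand[OF nz[OF i], of "k' i" W p] Wok[OF i] kk[OF i] by (simp add: D'_def e_def)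
  have "(\<Sum>i=1..b. int (\<Sum>w<W. D (i, w) * p ^ e (i, w))) = (\<Sum>i=1..b. int (\<Sum>w<W. D' (i, w) * p ^ e (i, w)))"
    using assms(8) Rm Rn by simp
  then have "(\<Sum>i=1..b. (\<Sum>w<W. D (i, w) * p ^ e (i, w))) = (\<Sum>i=1..b. (\<Sum>w<W. D' (i, w) * p ^ e (i, w)))"
    by (simp only: of_nat_sum[symmetric] of_nat_eq_iff)
  then have eqA: "(\<Sum>x\<in>A. D x * p ^ e x) = (\<Sum>x\<in>A. D' x * p ^ e x)"
    unfolding A_def sum.cartesian_product by simp
  have injA: "inj_on e A"
  proof (rule inj_onI)
    fix x z assume x: "x \<in> A" and z: "z \<in> A" and ex: "e x = e z"
    obtain i1 w1 where x1: "x = (i1, w1)" by (cases x)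
    obtain i2 w2 where z1: "z = (i2, w2)" by (cases z)
    have r: "1 \<le> i1" "i1 \<le> b" "1 \<le> i2" "i2 \<le> b" using x z x1 z1 unfolding A_def by auto
    have "(i1 - 1) + b * w1 = (i2 - 1) + b * w2" using ex x1 z1 unfolding e_def by simp
    then have "i1 - 1 = i2 - 1 \<and> w1 = w2" by (rule enc_inj) (use r in auto)
    then show "x = z" using x1 z1 r by auto
  qed
  have bdA: "\<forall>x\<in>A. D x < p \<and> D' x < p"
  proof
    fix x
    have "D x \<le> ydig b y (fst x) (snd x)" "D' x \<le> ydig b y (fst x) (snd x)"
      unfolding D_def D'_def by (rule cc_le)+
    moreover have "ydig b y (fst x) (snd x) < p" unfolding ydig_def using assms(3) by blast
    ultimately show "D x < p \<and> D' x < p" by linarith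
  qed
  have DD: "\<forall>x\<in>A. D x = D' x"
    by (rule digits_unique_inj[OF _ injA bdA eqA]) (simp add: A_def)
  have keq: "k i = k' i" if i: "i \<in> {1..b}" for i
  proof -
    have "k i = (\<Sum>w<W. cc (ydig b y i) (k i) w)" using cc_sum Wok[OF i] by simp
    also have "\<dots> = (\<Sum>w<W. cc (ydig b y i) (k' i) w)"
      by (rule sum.cong) (use DD i in \<open>auto simp: A_def D_def D'_def\<close>)
    also have "\<dots> = k' i" using cc_sum Wok[OF i] by simp
    finally show ?thesis .
  qed
  define d where "d i = m i - n i" for i
  have drel: "int p * d i = d (cprev b i)" if i: "i \<in> {1..b}" for i
    using kk[OF i] keq[OF i] by (simp add: d_def algebra_simps)
  have cpr: "cprev b i \<in> {1..b}" if "i \<in> {1..b}" for i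
    using that by (auto simp: cprev_def)
  define M where "M = Max ((\<lambda>i. \<bar>d i\<bar>) ` {1..b})"
  have ne: "(\<lambda>i. \<bar>d i\<bar>) ` {1..b} \<noteq> {}" using assms(2) by auto
  have "M \<in> (\<lambda>i. \<bar>d i\<bar>) ` {1..b}" unfolding M_def by (rule Max_in) (use ne in auto)
  then obtain i0 where i0: "i0 \<in> {1..b}" "\<bar>d i0\<bar> = M" by auto
  have le: "\<bar>d i\<bar> \<le> M" if "i \<in> {1..b}" for i using that unfolding M_def by simp
  have "int p * M = \<bar>int p * d i0\<bar>" using i0(2) by (simp add: abs_mult)
  also have "\<dots> = \<bar>d (cprev b i0)\<bar>" using drel[OF i0(1)] by simp
  also have "\<dots> \<le> M" using le cpr i0 by blast
  finally have "int p * M \<le> M" .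
  moreover have "M \<ge> 0" using i0 by auto
  moreover have "2 * M \<le> int p * M" using p2 \<open>M \<ge> 0\<close> by (intro mult_right_mono) auto
  ultimately have "M = 0" by linarith
  then show ?thesis using le by (auto simp: d_def)
qed

end
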